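(* Problem (RO-$\Sigma$) has an optimal solution $(B,\beta_1,\ldots,\beta_B)$ satisfying $|\{b\in\{1,\ldots,B\}: i\in\beta_b\}|<|\{b\in\{1,\ldots,B\}: j\in\beta_b\}|$ for all candidates $i<j$ that belong to the same contest.
   Context: A ballot style consists of contests $\mathcal{C}=\{1,\ldots,C\}$, candidates $\mathcal{N}=\{1,\ldots,N\}$ partitioned into nonempty sets $\mathcal{N}_c$ ($c\in\mathcal{C}$), and positive integers $v_c$. A filled-out ballot is a subset $\beta\subseteq\mathcal{N}$; $\mathscr{B}=\{\beta\subseteq\mathcal{N}: |\mathcal{N}_c\cap\beta|\le v_c\ \forall c\}$. For $i\in\mathcal{N}_c$: $T^*_i(\beta_1,\ldots,\beta_B)=\sum_{b=1}^B\mathbb{I}\{i\in\beta_b\text{ and }|\mathcal{N}_c\cap\beta_b|\le v_c\}$, and for a bijection $\sigma$ of $\mathcal{N}$, $T^\sigma_i(\beta_1,\ldots,\beta_B)=\sum_{b=1}^B\mathbb{I}\{\sigma(i)\in\beta_b\text{ and }|\{\sigma(j)\in\beta_b: j\in\mathcal{N}_c\}|\le v_c\}$. $\Sigma$ is the set of non-identity bijections $\mathcal{N}\to\mathcal{N}$. Problem (RO-$\Sigma$): minimize $B$ over $B\in\mathbb{N}$ and $\beta_1,\ldots,\beta_B\in\mathscr{B}$ subject to $T^\sigma(\beta_1,\ldots,\beta_B)\neq T^*(\beta_1,\ldots,\beta_B)$ for all $\sigma\in\Sigma$. *)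

theory Defs
  imports Main
begin

text \<open>Ballot style: candidates {1..N}, contests {1..C}; con i is the contest of candidate i,
  so the contest sets are N_c = contest_set N con c. v c is the vote limit of contest c.
  A sequence of ballots beta_1..beta_B is a list of sets (index b ranges over 0..<B).\<close>

definition contest_set :: "nat \<Rightarrow> (nat \<Rightarrow> nat) \<Rightarrow> nat \<Rightarrow> nat set" where
  "contest_set N con c = {i \<in> {1..N}. con i = c}"

definition ballots :: "nat \<Rightarrow> nat \<Rightarrow> (nat \<Rightarrow> nat) \<Rightarrow> (nat \<Rightarrow> nat) \<Rightarrow> nat set set" where
  "ballots N C con v = {\<beta>. \<beta> \<subseteq> {1..N} \<and>
      (\<forall>c\<in>{1..C}. card (contest_set N con c \<inter> \<beta>) \<le> v c)}"

definition Tstar :: "nat \<Rightarrow> (nat \<Rightarrow> nat) \<Rightarrow> (nat \<Rightarrow> nat) \<Rightarrow> nat set list \<Rightarrow> nat \<Rightarrow> nat" where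
  "Tstar N con v bs i = card {b. b < length bs \<and> i \<in> bs ! b \<and>
      card (contest_set N con (con i) \<inter> bs ! b) \<le> v (con i)}"

definition Tsigma :: "nat \<Rightarrow> (nat \<Rightarrow> nat) \<Rightarrow> (nat \<Rightarrow> nat) \<Rightarrow> (nat \<Rightarrow> nat) \<Rightarrow> nat set list \<Rightarrow> nat \<Rightarrow> nat" where
  "Tsigma N con v \<sigma> bs i = card {b. b < length bs \<and> \<sigma> i \<in> bs ! b \<and>
      card {\<sigma> j | j. j \<in> contest_set N con (con i) \<and> \<sigma> j \<in> bs ! b} \<le> v (con i)}"

definition Sigma_set :: "nat \<Rightarrow> (nat \<Rightarrow> nat) set" where
  "Sigma_set N = {\<sigma>. bij_betw \<sigma> {1..N} {1..N} \<and> (\<exists>i\<in>{1..N}. \<sigma> i \<noteq> i)}"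

definition RO_feasible :: "nat \<Rightarrow> nat \<Rightarrow> (nat \<Rightarrow> nat) \<Rightarrow> (nat \<Rightarrow> nat) \<Rightarrow> nat set list \<Rightarrow> bool" where
  "RO_feasible N C con v bs \<longleftrightarrow> set bs \<subseteq> ballots N C con v \<and>
     (\<forall>\<sigma>\<in>Sigma_set N. \<exists>i\<in>{1..N}. Tsigma N con v \<sigma> bs i \<noteq> Tstar N con v bs i)"

definition RO_optimal :: "nat \<Rightarrow> nat \<Rightarrow> (nat \<Rightarrow> nat) \<Rightarrow> (nat \<Rightarrow> nat) \<Rightarrow> nat set list \<Rightarrow> bool" where
  "RO_optimal N C con v bs \<longleftrightarrow> RO_feasible N C con v bs \<and>
     (\<forall>bs'. RO_feasible N C con v bs' \<longrightarrow> length bs \<le> length bs')"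

definition appearances :: "nat set list \<Rightarrow> nat \<Rightarrow> nat" where
  "appearances bs i = card {b. b < length bs \<and> i \<in> bs ! b}"

end

theory Submission
  imports Defs
begin

definition good :: "nat \<Rightarrow> (nat \<Rightarrow> nat) \<Rightarrow> (nat \<Rightarrow> nat) \<Rightarrow> bool" where
  "good N con \<pi> \<longleftrightarrow> (\<forall>x\<in>{1..N}. \<pi> x \<in> {1..N} \<and> \<pi> (\<pi> x) = x \<and> con (\<pi> x) = con x)"

definition permb :: "(nat \<Rightarrow> nat) \<Rightarrow> nat set list \<Rightarrow> nat set list" where
  "permb \<pi> bs = map (\<lambda>\<beta>. \<pi> ` \<beta>) bs"

lemma good_mem:
  assumes "good N con \<pi>" "\<beta> \<subseteq> {1..N}" "k \<in> {1..N}"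
  shows "(k \<in> \<pi> ` \<beta>) = (\<pi> k \<in> \<beta>)"
proof
  assume "k \<in> \<pi> ` \<beta>" then obtain y where y: "y \<in> \<beta>" "k = \<pi> y" by auto
  then have "y \<in> {1..N}" using assms(2) by auto
  then show "\<pi> k \<in> \<beta>" using y assms(1) unfolding good_def by auto
next
  assume "\<pi> k \<in> \<beta>" then have "\<pi> (\<pi> k) \<in> \<pi> ` \<beta>" by blast
  then show "k \<in> \<pi> ` \<beta>" using assms(1,3) unfolding good_def by auto
qed

lemma good_inj: "good N con \<pi> \<Longrightarrow> inj_on \<pi> {1..N}"
  unfolding good_def by (metis inj_onI)

lemma good_bij: "good N con \<pi> \<Longrightarrow> bij_betw \<pi> {1..N} {1..N}"
  unfolding good_def by (intro bij_betw_byWitness[where f'=\<pi>]) auto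

lemma good_CS:
  assumes "good N con \<pi>" "\<beta> \<subseteq> {1..N}"
  shows "contest_set N con c \<inter> \<pi> ` \<beta> = \<pi> ` (contest_set N con c \<inter> \<beta>)"
proof
  show "contest_set N con c \<inter> \<pi> ` \<beta> \<subseteq> \<pi> ` (contest_set N con c \<inter> \<beta>)"
  proof
    fix x assume x: "x \<in> contest_set N con c \<inter> \<pi> ` \<beta>"
    then obtain y where y: "y \<in> \<beta>" "x = \<pi> y" by auto
    have "y \<in> {1..N}" using y assms(2) by auto
    then have "y \<in> contest_set N con c" using x y assms(1) unfolding good_def contest_set_def by auto
    then show "x \<in> \<pi> ` (contest_set N con c \<inter> \<beta>)" using y by auto
  qed
next
  show "\<pi> ` (contest_set N con c \<inter> \<beta>) \<subseteq> contest_set N con c \<inter> \<pi> ` \<beta>"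
    using assms(1) unfolding good_def contest_set_def by auto
qed

lemma good_card:
  assumes "good N con \<pi>" "\<beta> \<subseteq> {1..N}"
  shows "card (contest_set N con c \<inter> \<pi> ` \<beta>) = card (contest_set N con c \<inter> \<beta>)"
proof -
  have "inj_on \<pi> (contest_set N con c \<inter> \<beta>)"
    using good_inj[OF assms(1)] by (rule inj_on_subset) (use assms(2) in auto)
  then show ?thesis using good_CS[OF assms] by (simp add: card_image)
qed

lemma Tstar_perm:
  assumes "good N con \<pi>" "\<forall>\<beta>\<in>set bs. \<beta> \<subseteq> {1..N}" "i \<in> {1..N}"
  shows "Tstar N con v (permb \<pi> bs) i = Tstar N con v bs (\<pi> i)"
proof -
  have c: "con (\<pi> i) = con i" using assms(1,3) unfolding good_def by auto
  show ?thesis unfolding Tstar_def permb_def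
  proof (intro arg_cong[where f=card] Collect_cong)
    fix b
    show "(b < length (map ((`) \<pi>) bs) \<and> i \<in> map ((`) \<pi>) bs ! b \<and>
          card (contest_set N con (con i) \<inter> map ((`) \<pi>) bs ! b) \<le> v (con i)) =
         (b < length bs \<and> \<pi> i \<in> bs ! b \<and>
          card (contest_set N con (con (\<pi> i)) \<inter> bs ! b) \<le> v (con (\<pi> i)))"
    proof (cases "b < length bs")
      case True
      then have s: "bs ! b \<subseteq> {1..N}" using assms(2) nth_mem by blast
      show ?thesis using True good_mem[OF assms(1) s assms(3)] good_card[OF assms(1) s] c by simp
    qed simp
  qed
qed

lemma app_perm:
  assumes "good N con \<pi>" "\<forall>\<beta>\<in>set bs. \<beta> \<subseteq> {1..N}" "i \<in> {1..N}"
  shows "appearances (permb \<pi> bs) i = appearances bs (\<pi> i)"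
proof -
  show ?thesis unfolding appearances_def permb_def
  proof (intro arg_cong[where f=card] Collect_cong)
    fix b
    show "(b < length (map ((`) \<pi>) bs) \<and> i \<in> map ((`) \<pi>) bs ! b) =
         (b < length bs \<and> \<pi> i \<in> bs ! b)"
    proof (cases "b < length bs")
      case True
      then have s: "bs ! b \<subseteq> {1..N}" using assms(2) nth_mem by blast
      show ?thesis using True good_mem[OF assms(1) s assms(3)] by simp
    qed simp
  qed
qed

lemma sig_set:
  assumes "good N con \<pi>" "\<beta> \<subseteq> {1..N}" "\<forall>x\<in>{1..N}. \<sigma> x \<in> {1..N}"
  shows "{(\<pi> \<circ> \<sigma> \<circ> \<pi>) j |j. j \<in> contest_set N con c \<and> (\<pi> \<circ> \<sigma> \<circ> \<pi>) j \<in> \<beta>}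
       = \<pi> ` {\<sigma> j |j. j \<in> contest_set N con c \<and> \<sigma> j \<in> \<pi> ` \<beta>}"
proof
  show "{(\<pi> \<circ> \<sigma> \<circ> \<pi>) j |j. j \<in> contest_set N con c \<and> (\<pi> \<circ> \<sigma> \<circ> \<pi>) j \<in> \<beta>}
       \<subseteq> \<pi> ` {\<sigma> j |j. j \<in> contest_set N con c \<and> \<sigma> j \<in> \<pi> ` \<beta>}"
  proof
    fix x assume "x \<in> {(\<pi> \<circ> \<sigma> \<circ> \<pi>) j |j. j \<in> contest_set N con c \<and> (\<pi> \<circ> \<sigma> \<circ> \<pi>) j \<in> \<beta>}"
    then obtain j where j: "j \<in> contest_set N con c" "\<pi> (\<sigma> (\<pi> j)) \<in> \<beta>" "x = \<pi> (\<sigma> (\<pi> j))" by auto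
    have jN: "j \<in> {1..N}" using j(1) unfolding contest_set_def by auto
    then have pj: "\<pi> j \<in> contest_set N con c" using j(1) assms(1) unfolding good_def contest_set_def by auto
    have "\<pi> j \<in> {1..N}" using jN assms(1) unfolding good_def by auto
    then have "\<sigma> (\<pi> j) \<in> {1..N}" using assms(3) by auto
    then have "\<sigma> (\<pi> j) \<in> \<pi> ` \<beta>" using good_mem[OF assms(1,2)] j(2) by blast
    then show "x \<in> \<pi> ` {\<sigma> j |j. j \<in> contest_set N con c \<and> \<sigma> j \<in> \<pi> ` \<beta>}"
      using pj j(3) by blast
  qed
next
  show "\<pi> ` {\<sigma> j |j. j \<in> contest_set N con c \<and> \<sigma> j \<in> \<pi> ` \<beta>}
     \<subseteq> {(\<pi> \<circ> \<sigma> \<circ> \<pi>) j |j. j \<in> contest_set N con c \<and> (\<pi> \<circ> \<sigma> \<circ> \<pi>) j \<in> \<beta>}"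
  proof
    fix x assume "x \<in> \<pi> ` {\<sigma> j |j. j \<in> contest_set N con c \<and> \<sigma> j \<in> \<pi> ` \<beta>}"
    then obtain j where j: "j \<in> contest_set N con c" "\<sigma> j \<in> \<pi> ` \<beta>" "x = \<pi> (\<sigma> j)" by auto
    have jN: "j \<in> {1..N}" using j(1) unfolding contest_set_def by auto
    then have pj: "\<pi> j \<in> contest_set N con c" "\<pi> (\<pi> j) = j"
      using j(1) assms(1) unfolding good_def contest_set_def by auto
    have "\<sigma> j \<in> {1..N}" using jN assms(3) by auto
    then have "\<pi> (\<sigma> j) \<in> \<beta>" using good_mem[OF assms(1,2)] j(2) by blast
    then show "x \<in> {(\<pi> \<circ> \<sigma> \<circ> \<pi>) j |j. j \<in> contest_set N con c \<and> (\<pi> \<circ> \<sigma> \<circ> \<pi>) j \<in> \<beta>}"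
      using pj j(3) by (intro CollectI exI[of _ "\<pi> j"]) auto
  qed
qed

lemma Tsigma_perm:
  assumes "good N con \<pi>" "\<forall>\<beta>\<in>set bs. \<beta> \<subseteq> {1..N}" "\<forall>x\<in>{1..N}. \<sigma> x \<in> {1..N}" "i \<in> {1..N}"
  shows "Tsigma N con v \<sigma> (permb \<pi> bs) i = Tsigma N con v (\<pi> \<circ> \<sigma> \<circ> \<pi>) bs (\<pi> i)"
proof -
  have c: "con (\<pi> i) = con i" and pp: "\<pi> (\<pi> i) = i" using assms(1,4) unfolding good_def by auto
  have si: "\<sigma> i \<in> {1..N}" using assms(3,4) by auto
  show ?thesis unfolding Tsigma_def permb_def
  proof (intro arg_cong[where f=card] Collect_cong)
    fix b
    show "(b < length (map ((`) \<pi>) bs) \<and> \<sigma> i \<in> map ((`) \<pi>) bs ! b \<and>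
          card {\<sigma> j |j. j \<in> contest_set N con (con i) \<and> \<sigma> j \<in> map ((`) \<pi>) bs ! b} \<le> v (con i)) =
         (b < length bs \<and> (\<pi> \<circ> \<sigma> \<circ> \<pi>) (\<pi> i) \<in> bs ! b \<and>
          card {(\<pi> \<circ> \<sigma> \<circ> \<pi>) j |j. j \<in> contest_set N con (con (\<pi> i)) \<and> (\<pi> \<circ> \<sigma> \<circ> \<pi>) j \<in> bs ! b}
          \<le> v (con (\<pi> i)))"
    proof (cases "b < length bs")
      case True
      then have s: "bs ! b \<subseteq> {1..N}" using assms(2) nth_mem by blast
      have sub: "{\<sigma> j |j. j \<in> contest_set N con (con i) \<and> \<sigma> j \<in> \<pi> ` (bs ! b)} \<subseteq> {1..N}"
      proof (rule subsetI)
        fix y assume "y \<in> {\<sigma> j |j. j \<in> contest_set N con (con i) \<and> \<sigma> j \<in> \<pi> ` (bs ! b)}"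
        then obtain j where "j \<in> contest_set N con (con i)" "y = \<sigma> j" by blast
        then show "y \<in> {1..N}" using assms(3) unfolding contest_set_def by auto
      qed
      have inj: "inj_on \<pi> {\<sigma> j |j. j \<in> contest_set N con (con i) \<and> \<sigma> j \<in> \<pi> ` (bs ! b)}"
        using good_inj[OF assms(1)] sub by (rule inj_on_subset)
      have cd: "card {(\<pi> \<circ> \<sigma> \<circ> \<pi>) j |j. j \<in> contest_set N con (con i) \<and> (\<pi> \<circ> \<sigma> \<circ> \<pi>) j \<in> bs ! b}
          = card {\<sigma> j |j. j \<in> contest_set N con (con i) \<and> \<sigma> j \<in> \<pi> ` (bs ! b)}"
        unfolding sig_set[OF assms(1) s assms(3)] using inj by (rule card_image)
      show ?thesis using True good_mem[OF assms(1) s si] c pp cd by simp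
    qed simp
  qed
qed

lemma perm_feasible:
  assumes "good N con \<pi>" "RO_feasible N C con v bs"
  shows "RO_feasible N C con v (permb \<pi> bs)"
proof -
  have sb: "set bs \<subseteq> ballots N C con v" using assms(2) unfolding RO_feasible_def by blast
  have val: "\<forall>\<beta>\<in>set bs. \<beta> \<subseteq> {1..N}" using sb unfolding ballots_def by blast
  have "set (permb \<pi> bs) \<subseteq> ballots N C con v"
  proof
    fix \<gamma> assume "\<gamma> \<in> set (permb \<pi> bs)"
    then obtain \<beta> where b: "\<beta> \<in> set bs" "\<gamma> = \<pi> ` \<beta>" unfolding permb_def by auto
    have bb: "\<beta> \<in> ballots N C con v" using b(1) sb by blast
    have s: "\<beta> \<subseteq> {1..N}" using val b by auto
    have "\<pi> ` \<beta> \<subseteq> {1..N}"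
    proof (rule image_subsetI)
      fix y assume "y \<in> \<beta>"
      then have "y \<in> {1..N}" using s by blast
      then show "\<pi> y \<in> {1..N}" using assms(1) unfolding good_def by blast
    qed
    then have "\<gamma> \<subseteq> {1..N}" using b(2) by simp
    moreover have "card (contest_set N con c \<inter> \<gamma>) = card (contest_set N con c \<inter> \<beta>)" for c
      using good_card[OF assms(1) s] b(2) by simp
    ultimately show "\<gamma> \<in> ballots N C con v" using bb unfolding ballots_def by simp
  qed
  moreover have "\<exists>i\<in>{1..N}. Tsigma N con v \<sigma> (permb \<pi> bs) i \<noteq> Tstar N con v (permb \<pi> bs) i"
    if sg: "\<sigma> \<in> Sigma_set N" for \<sigma>
  proof -
    have sg': "bij_betw \<sigma> {1..N} {1..N} \<and> (\<exists>i\<in>{1..N}. \<sigma> i \<noteq> i)"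
      using sg unfolding Sigma_set_def by (rule CollectD)
    have bs: "bij_betw \<sigma> {1..N} {1..N}" using sg' by (rule conjunct1)
    have ex: "\<exists>i\<in>{1..N}. \<sigma> i \<noteq> i" using sg' by (rule conjunct2)
    have sm: "\<forall>x\<in>{1..N}. \<sigma> x \<in> {1..N}"
    proof
      fix x assume "x \<in> {1..N}" then show "\<sigma> x \<in> {1..N}" by (rule bij_betw_apply[OF bs])
    qed
    have bp: "bij_betw \<pi> {1..N} {1..N}" using good_bij[OF assms(1)] .
    have "bij_betw (\<pi> \<circ> (\<sigma> \<circ> \<pi>)) {1..N} {1..N}"
      by (rule bij_betw_trans[OF bij_betw_trans[OF bp bs] bp])
    then have bt: "bij_betw (\<pi> \<circ> \<sigma> \<circ> \<pi>) {1..N} {1..N}" by (simp add: comp_assoc)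
    obtain x where x: "x \<in> {1..N}" "\<sigma> x \<noteq> x" using ex by blast
    have sx: "\<sigma> x \<in> {1..N}" using sm x(1) by blast
    have gx: "\<pi> (\<pi> x) = x" using x(1) assms(1) unfolding good_def by blast
    have gsx: "\<pi> (\<pi> (\<sigma> x)) = \<sigma> x" using sx assms(1) unfolding good_def by blast
    have "(\<pi> \<circ> \<sigma> \<circ> \<pi>) (\<pi> x) \<noteq> \<pi> x"
    proof
      assume "(\<pi> \<circ> \<sigma> \<circ> \<pi>) (\<pi> x) = \<pi> x"
      then have "\<pi> (\<sigma> x) = \<pi> x" using gx by simp
      then have "\<pi> (\<pi> (\<sigma> x)) = \<pi> (\<pi> x)" by simp
      then show False using gx gsx x(2) by simp
    qed
    moreover have "\<pi> x \<in> {1..N}" using x(1) assms(1) unfolding good_def by blast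
    ultimately have "\<exists>i\<in>{1..N}. (\<pi> \<circ> \<sigma> \<circ> \<pi>) i \<noteq> i" by blast
    then have "(\<pi> \<circ> \<sigma> \<circ> \<pi>) \<in> Sigma_set N" using bt unfolding Sigma_set_def by simp
    moreover have "\<forall>\<tau>\<in>Sigma_set N. \<exists>i\<in>{1..N}. Tsigma N con v \<tau> bs i \<noteq> Tstar N con v bs i"
      using assms(2) unfolding RO_feasible_def by blast
    ultimately obtain k where k: "k \<in> {1..N}" "Tsigma N con v (\<pi> \<circ> \<sigma> \<circ> \<pi>) bs k \<noteq> Tstar N con v bs k"
      by blast
    have pk: "\<pi> k \<in> {1..N}" "\<pi> (\<pi> k) = k" using k(1) assms(1) unfolding good_def by blast+
    have e1: "Tsigma N con v \<sigma> (permb \<pi> bs) (\<pi> k) = Tsigma N con v (\<pi> \<circ> \<sigma> \<circ> \<pi>) bs k"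
      using Tsigma_perm[OF assms(1) val sm pk(1)] pk(2) by simp
    have e2: "Tstar N con v (permb \<pi> bs) (\<pi> k) = Tstar N con v bs k"
      using Tstar_perm[OF assms(1) val pk(1)] pk(2) by simp
    have "Tsigma N con v \<sigma> (permb \<pi> bs) (\<pi> k) \<noteq> Tstar N con v (permb \<pi> bs) (\<pi> k)"
      unfolding e1 e2 using k(2) .
    then show ?thesis using pk(1) by blast
  qed
  ultimately show ?thesis unfolding RO_feasible_def by blast
qed

lemma Tsigma_good:
  assumes "good N con \<pi>" "i \<in> {1..N}"
  shows "Tsigma N con v \<pi> bs i = Tstar N con v bs (\<pi> i)"
proof -
  have c: "con (\<pi> i) = con i" using assms unfolding good_def by auto
  have e: "{\<pi> j |j. j \<in> contest_set N con (con i) \<and> \<pi> j \<in> \<beta>} = contest_set N con (con i) \<inter> \<beta>" for \<beta>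
  proof
    show "{\<pi> j |j. j \<in> contest_set N con (con i) \<and> \<pi> j \<in> \<beta>} \<subseteq> contest_set N con (con i) \<inter> \<beta>"
      using assms(1) unfolding good_def contest_set_def by auto
    show "contest_set N con (con i) \<inter> \<beta> \<subseteq> {\<pi> j |j. j \<in> contest_set N con (con i) \<and> \<pi> j \<in> \<beta>}"
    proof
      fix y assume y: "y \<in> contest_set N con (con i) \<inter> \<beta>"
      then have "\<pi> y \<in> contest_set N con (con i)" "\<pi> (\<pi> y) = y"
        using assms(1) unfolding good_def contest_set_def by auto
      then show "y \<in> {\<pi> j |j. j \<in> contest_set N con (con i) \<and> \<pi> j \<in> \<beta>}" using y
        by (intro CollectI exI[of _ "\<pi> y"]) auto
    qed
  qed
  show ?thesis unfolding Tsigma_def Tstar_def e c ..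
qed

lemma Tstar_app:
  assumes "set bs \<subseteq> ballots N C con v" "con ` {1..N} = {1..C}" "k \<in> {1..N}"
  shows "Tstar N con v bs k = appearances bs k"
proof -
  have ck: "con k \<in> {1..C}" using assms(2,3) by blast
  show ?thesis unfolding Tstar_def appearances_def
  proof (intro arg_cong[where f=card] Collect_cong)
    fix b
    show "(b < length bs \<and> k \<in> bs ! b \<and> card (contest_set N con (con k) \<inter> bs ! b) \<le> v (con k)) =
          (b < length bs \<and> k \<in> bs ! b)"
    proof (cases "b < length bs")
      case True
      then have "bs ! b \<in> ballots N C con v" using assms(1) nth_mem by blast
      then show ?thesis using ck unfolding ballots_def by auto
    qed simp
  qed
qed

fun bs0 :: "nat \<Rightarrow> nat set list" where
  "bs0 0 = []"
| "bs0 (Suc n) = bs0 n @ replicate (Suc n) {Suc n}"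

lemma bs0_set: "\<beta> \<in> set (bs0 n) \<Longrightarrow> \<exists>k\<in>{1..n}. \<beta> = {k}"
  by (induction n) auto

lemma bs0_count: "length (filter (\<lambda>\<beta>. \<beta> = {m}) (bs0 n)) = (if 1 \<le> m \<and> m \<le> n then m else 0)"
  by (induction n) (auto simp: filter_replicate)


lemma card_le1: "card (A \<inter> {k}) \<le> 1"
proof -
  have "card (A \<inter> {k}) \<le> card {k}" by (rule card_mono) auto
  then show ?thesis by simp
qed

lemma card_img_le1: "card {\<sigma> j |j. j \<in> A \<and> \<sigma> j \<in> {k}} \<le> 1"
proof -
  have "{\<sigma> j |j. j \<in> A \<and> \<sigma> j \<in> {k}} \<subseteq> {k}" by auto
  then have "card {\<sigma> j |j. j \<in> A \<and> \<sigma> j \<in> {k}} \<le> card {k}" by (rule card_mono[rotated]) auto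
  then show ?thesis by simp
qed

lemma bs0_Tsigma:
  assumes "con ` {1..N} = {1..C}" "\<forall>c\<in>{1..C}. v c > 0" "i \<in> {1..N}" "\<sigma> i \<in> {1..N}"
  shows "Tsigma N con v \<sigma> (bs0 N) i = \<sigma> i"
proof -
  have "con i \<in> {1..C}" using assms(1,3) by blast
  then have vp: "v (con i) \<ge> 1" using assms(2) by (simp add: Suc_le_eq)
  have "Tsigma N con v \<sigma> (bs0 N) i = length (filter (\<lambda>\<beta>. \<sigma> i \<in> \<beta> \<and>
      card {\<sigma> j |j. j \<in> contest_set N con (con i) \<and> \<sigma> j \<in> \<beta>} \<le> v (con i)) (bs0 N))"
    unfolding Tsigma_def length_filter_conv_card by simp
  also have "\<dots> = length (filter (\<lambda>\<beta>. \<beta> = {\<sigma> i}) (bs0 N))"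
  proof (rule arg_cong[where f=length], rule filter_cong[OF refl])
    fix \<beta> assume "\<beta> \<in> set (bs0 N)"
    then obtain k where k: "\<beta> = {k}" using bs0_set by blast
    show "(\<sigma> i \<in> \<beta> \<and> card {\<sigma> j |j. j \<in> contest_set N con (con i) \<and> \<sigma> j \<in> \<beta>} \<le> v (con i)) = (\<beta> = {\<sigma> i})"
      using k card_img_le1[of \<sigma> "contest_set N con (con i)" k] vp by auto
  qed
  also have "\<dots> = \<sigma> i" using bs0_count assms(4) by simp
  finally show ?thesis .
qed

lemma bs0_Tstar:
  assumes "con ` {1..N} = {1..C}" "\<forall>c\<in>{1..C}. v c > 0" "i \<in> {1..N}"
  shows "Tstar N con v (bs0 N) i = i"
proof -
  have "con i \<in> {1..C}" using assms(1,3) by blast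
  then have vp: "v (con i) \<ge> 1" using assms(2) by (simp add: Suc_le_eq)
  have "Tstar N con v (bs0 N) i = length (filter (\<lambda>\<beta>. i \<in> \<beta> \<and>
      card (contest_set N con (con i) \<inter> \<beta>) \<le> v (con i)) (bs0 N))"
    unfolding Tstar_def length_filter_conv_card by simp
  also have "\<dots> = length (filter (\<lambda>\<beta>. \<beta> = {i}) (bs0 N))"
  proof (rule arg_cong[where f=length], rule filter_cong[OF refl])
    fix \<beta> assume "\<beta> \<in> set (bs0 N)"
    then obtain k where k: "\<beta> = {k}" using bs0_set by blast
    show "(i \<in> \<beta> \<and> card (contest_set N con (con i) \<inter> \<beta>) \<le> v (con i)) = (\<beta> = {i})"
      using k card_le1[of "contest_set N con (con i)" k] vp by auto
  qed
  also have "\<dots> = i" using bs0_count assms(3) by simp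
  finally show ?thesis .
qed

lemma bs0_feasible:
  assumes "con ` {1..N} = {1..C}" "\<forall>c\<in>{1..C}. v c > 0"
  shows "RO_feasible N C con v (bs0 N)"
proof -
  have "set (bs0 N) \<subseteq> ballots N C con v"
  proof
    fix \<beta> assume "\<beta> \<in> set (bs0 N)"
    then obtain k where k: "k \<in> {1..N}" "\<beta> = {k}" using bs0_set by blast
    show "\<beta> \<in> ballots N C con v" unfolding ballots_def
    proof (intro CollectI conjI ballI)
      show "\<beta> \<subseteq> {1..N}" using k by auto
      fix c assume "c \<in> {1..C}"
      then have "v c \<ge> 1" using assms(2) by (simp add: Suc_leI)
      then show "card (contest_set N con c \<inter> \<beta>) \<le> v c" using card_le1[of _ k] k(2)
        by (meson le_trans)
    qed
  qed
  moreover have "\<exists>i\<in>{1..N}. Tsigma N con v \<sigma> (bs0 N) i \<noteq> Tstar N con v (bs0 N) i"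
    if "\<sigma> \<in> Sigma_set N" for \<sigma>
  proof -
    have sg': "bij_betw \<sigma> {1..N} {1..N} \<and> (\<exists>i\<in>{1..N}. \<sigma> i \<noteq> i)"
      using that unfolding Sigma_set_def by (rule CollectD)
    have b: "bij_betw \<sigma> {1..N} {1..N}" using sg' by (rule conjunct1)
    have "\<exists>i\<in>{1..N}. \<sigma> i \<noteq> i" using sg' by (rule conjunct2)
    then obtain i where i: "i \<in> {1..N}" "\<sigma> i \<noteq> i" by blast
    have "\<sigma> i \<in> {1..N}" using i(1) by (rule bij_betw_apply[OF b])
    then have "Tsigma N con v \<sigma> (bs0 N) i \<noteq> Tstar N con v (bs0 N) i"
      using bs0_Tsigma[OF assms i(1)] bs0_Tstar[OF assms i(1)] i(2) by simp
    then show ?thesis using i(1) by blast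
  qed
  ultimately show ?thesis unfolding RO_feasible_def by blast
qed

lemma swap_ineq:
  fixes i j a b :: nat
  assumes "i < j" "b < a"
  shows "i * a + j * b < i * b + j * a"
proof -
  obtain e where e: "j = Suc (i + e)" using assms(1) less_imp_Suc_add by blast
  obtain d where d: "a = Suc (b + d)" using assms(2) less_imp_Suc_add by blast
  show ?thesis unfolding e d by (simp add: algebra_simps)
qed

theorem proposition1:
  fixes N C :: nat and con v :: "nat \<Rightarrow> nat"
  assumes "con ` {1..N} = {1..C}"
    and "\<forall>c\<in>{1..C}. v c > 0"
  shows "\<exists>bs. RO_optimal N C con v bs \<and>
           (\<forall>i\<in>{1..N}. \<forall>j\<in>{1..N}. i < j \<and> con i = con j \<longrightarrow>
              appearances bs i < appearances bs j)"
proof -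
  define n0 where "n0 = (LEAST n. \<exists>bs. RO_feasible N C con v bs \<and> length bs = n)"
  have feas0: "RO_feasible N C con v (bs0 N)" using bs0_feasible[OF assms] .
  have "\<exists>bs. RO_feasible N C con v bs \<and> length bs = n0"
    unfolding n0_def by (rule LeastI[of _ "length (bs0 N)"]) (use feas0 in blast)
  then obtain bsw where bsw: "RO_feasible N C con v bsw" "length bsw = n0" by blast
  have least: "n0 \<le> length bs" if "RO_feasible N C con v bs" for bs
    unfolding n0_def by (rule Least_le) (use that in blast)
  have opt_iff: "RO_optimal N C con v bs \<longleftrightarrow> RO_feasible N C con v bs \<and> length bs = n0" for bs
    unfolding RO_optimal_def using bsw least by (metis le_antisym)
  define pot where "pot bs = (\<Sum>k\<in>{1..N}. k * appearances bs k)" for bs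
  have app_le: "appearances bs k \<le> length bs" for bs k
  proof -
    have "appearances bs k \<le> card {..<length bs}" unfolding appearances_def
      by (rule card_mono) auto
    then show ?thesis by simp
  qed
  define P where "P = pot ` {bs. RO_optimal N C con v bs}"
  have "P \<subseteq> {..(\<Sum>k\<in>{1..N}. k * n0)}"
  proof
    fix p assume "p \<in> P"
    then obtain bs where bs: "RO_optimal N C con v bs" "p = pot bs" unfolding P_def by auto
    have "pot bs \<le> (\<Sum>k\<in>{1..N}. k * n0)" unfolding pot_def
      using app_le[of bs] opt_iff[of bs] bs(1) by (intro sum_mono) auto
    then show "p \<in> {..(\<Sum>k\<in>{1..N}. k * n0)}" using bs by auto
  qed
  then have fP: "finite P" using finite_subset by blast
  have neP: "P \<noteq> {}" unfolding P_def using opt_iff bsw by auto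
  have "Max P \<in> P" using Max_in[OF fP neP] .
  then obtain bs where opt: "RO_optimal N C con v bs" and pm: "pot bs = Max P" unfolding P_def by auto
  have maxp: "pot bs' \<le> pot bs" if "RO_optimal N C con v bs'" for bs'
    unfolding pm using that fP by (intro Max_ge) (auto simp: P_def)
  have feas: "RO_feasible N C con v bs" using opt unfolding RO_optimal_def by blast
  have valb: "set bs \<subseteq> ballots N C con v" using feas unfolding RO_feasible_def by blast
  have val: "\<forall>\<beta>\<in>set bs. \<beta> \<subseteq> {1..N}" using valb unfolding ballots_def by auto
  have "appearances bs i < appearances bs j"
    if ij: "i \<in> {1..N}" "j \<in> {1..N}" "i < j" "con i = con j" for i j
  proof (rule ccontr)
    assume nlt: "\<not> appearances bs i < appearances bs j"
    define \<pi> where "\<pi> = (\<lambda>k::nat. if k = i then j else if k = j then i else k)"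
    have g: "good N con \<pi>" unfolding good_def \<pi>_def using ij by auto
    have "\<pi> \<in> Sigma_set N" unfolding Sigma_set_def using good_bij[OF g] ij unfolding \<pi>_def by auto
    then obtain k where k: "k \<in> {1..N}" "Tsigma N con v \<pi> bs k \<noteq> Tstar N con v bs k"
      using feas unfolding RO_feasible_def by blast
    have "Tstar N con v bs (\<pi> k) \<noteq> Tstar N con v bs k" using k Tsigma_good[OF g k(1)] by simp
    moreover have "\<pi> k \<in> {1..N}" using g k(1) unfolding good_def by auto
    ultimately have "appearances bs (\<pi> k) \<noteq> appearances bs k"
      using Tstar_app[OF valb assms(1)] k(1) by simp
    then have ne: "appearances bs i \<noteq> appearances bs j" unfolding \<pi>_def
      by (auto split: if_splits)
    then have lt: "appearances bs j < appearances bs i" using nlt by simp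
    define bs' where "bs' = permb \<pi> bs"
    have "RO_optimal N C con v bs'" unfolding opt_iff bs'_def
      using perm_feasible[OF g feas] opt opt_iff by (simp add: permb_def)
    then have le: "pot bs' \<le> pot bs" by (rule maxp)
    have ap: "appearances bs' k = appearances bs (\<pi> k)" if "k \<in> {1..N}" for k
      unfolding bs'_def using app_perm[OF g val that] .
    define S where "S = {1..N} - {i, j}"
    have fS: "finite S" unfolding S_def by simp
    have decomp: "{1..N} = insert i (insert j S)" unfolding S_def using ij by auto
    have iS: "i \<notin> S" "j \<notin> S" "i \<notin> insert j S" unfolding S_def using ij by auto
    have sS: "(\<Sum>k\<in>S. k * appearances bs' k) = (\<Sum>k\<in>S. k * appearances bs k)"
    proof (rule sum.cong[OF refl])
      fix k assume "k \<in> S"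
      then have "k \<in> {1..N}" "k \<noteq> i" "k \<noteq> j" unfolding S_def by auto
      then show "k * appearances bs' k = k * appearances bs k" using ap unfolding \<pi>_def by simp
    qed
    have p1: "pot bs' = i * appearances bs j + j * appearances bs i + (\<Sum>k\<in>S. k * appearances bs k)"
      unfolding pot_def decomp using fS iS sS ap ij unfolding \<pi>_def by simp
    have p2: "pot bs = i * appearances bs i + j * appearances bs j + (\<Sum>k\<in>S. k * appearances bs k)"
      unfolding pot_def decomp using fS iS by simp
    have "i * appearances bs i + j * appearances bs j < i * appearances bs j + j * appearances bs i"
      using swap_ineq[OF ij(3) lt] .
    then show False using le p1 p2 by linarith
  qed
  then show ?thesis using opt by blast
qed

end
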